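(* Let $G$ be a group acting effectively by homeomorphisms on a Tychonoff space $X$ via $\theta$, let $\tau_p$ be the topology of pointwise convergence on $G$ for this action, and assume that $((G,\tau_p),X,\theta)$ is a $G$-Tychonoff space. Let $bX$ be a $G$-compactification of $X$ and let $\tilde\theta:G\times bX\to bX$ be the extended action. Then the topology of pointwise convergence $\tau_p^{bX}$ on $G$ for $\tilde\theta$ is the least admissible group topology on $G$ for the action on $bX$, and $\tau_p^{bX}=\tau_p$.
   Context: All spaces are Tychonoff. For a group $G$ acting effectively by homeomorphisms on a space $X$, the topology of pointwise convergence $\tau_p$ on $G$ is the topology with subbase the sets $[x,O]=\{g\in G: gx\in O\}$, $x\in X$, $O$ open in $X$. A group topology on $G$ is admissible for the action if it makes $G$ a topological group and the action $G\times X\to X$ continuous. An equiuniformity on a $G$-space $X$ (topological group $G$ acting continuously) is a uniformity compatible with the topology of $X$ such that every $g\in G$ acts uniformly continuously and for every uniform cover $u$ there are a neighbourhood $O$ of the identity $e$ and a uniform cover $v$ with $\{OV:V\in v\}$ refining $u$; $X$ is $G$-Tychonoff if it admits an equiuniformity. A $G$-compactification of $X$ is the completion of $X$ with respect to a totally bounded equiuniformity; the action extends continuously to it and the embedding is equivariant. *)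

theory Defs
  imports "HOL-Analysis.Analysis" "HOL-Algebra.Group"
begin

definition tychonoff_space :: "'a topology \<Rightarrow> bool" where
  "tychonoff_space X \<longleftrightarrow> completely_regular_space X \<and> t1_space X"

definition action_by_homeos ::
  "('g, 'm) monoid_scheme \<Rightarrow> 'a topology \<Rightarrow> ('g \<Rightarrow> 'a \<Rightarrow> 'a) \<Rightarrow> bool" where
  "action_by_homeos G X theta \<longleftrightarrow> group G \<and>
     (\<forall>g\<in>carrier G. homeomorphic_map X X (theta g)) \<and>
     (\<forall>x\<in>topspace X. theta \<one>\<^bsub>G\<^esub> x = x) \<and>
     (\<forall>g\<in>carrier G. \<forall>h\<in>carrier G. \<forall>x\<in>topspace X.
         theta (g \<otimes>\<^bsub>G\<^esub> h) x = theta g (theta h x))"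

definition effective_action ::
  "('g, 'm) monoid_scheme \<Rightarrow> 'a topology \<Rightarrow> ('g \<Rightarrow> 'a \<Rightarrow> 'a) \<Rightarrow> bool" where
  "effective_action G X theta \<longleftrightarrow> action_by_homeos G X theta \<and>
     (\<forall>g\<in>carrier G. (\<forall>x\<in>topspace X. theta g x = x) \<longrightarrow> g = \<one>\<^bsub>G\<^esub>)"

text \<open>The topology of pointwise convergence: subbase [x,O] = {g. g x \<in> O}.
  (The whole carrier is added to the subbase; this does not change the
  generated topology but makes the underlying set equal to carrier G
  also when X is empty.)\<close>
definition pointwise_topology ::
  "('g, 'm) monoid_scheme \<Rightarrow> 'a topology \<Rightarrow> ('g \<Rightarrow> 'a \<Rightarrow> 'a) \<Rightarrow> 'g topology" where
  "pointwise_topology G X theta = topology_generated_by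
     (insert (carrier G)
       {{g \<in> carrier G. theta g x \<in> W} | x W. x \<in> topspace X \<and> openin X W})"

definition group_topology :: "('g, 'm) monoid_scheme \<Rightarrow> 'g topology \<Rightarrow> bool" where
  "group_topology G T \<longleftrightarrow> group G \<and> topspace T = carrier G \<and>
     continuous_map (prod_topology T T) T (\<lambda>(g, h). g \<otimes>\<^bsub>G\<^esub> h) \<and>
     continuous_map T T (\<lambda>g. inv\<^bsub>G\<^esub> g)"

definition G_space ::
  "('g, 'm) monoid_scheme \<Rightarrow> 'g topology \<Rightarrow> 'a topology \<Rightarrow> ('g \<Rightarrow> 'a \<Rightarrow> 'a) \<Rightarrow> bool" where
  "G_space G T X theta \<longleftrightarrow> group_topology G T \<and> action_by_homeos G X theta \<and>
     continuous_map (prod_topology T X) X (\<lambda>(g, x). theta g x)"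

definition admissible_topology ::
  "('g, 'm) monoid_scheme \<Rightarrow> 'a topology \<Rightarrow> ('g \<Rightarrow> 'a \<Rightarrow> 'a) \<Rightarrow> 'g topology \<Rightarrow> bool" where
  "admissible_topology G X theta T \<longleftrightarrow> group_topology G T \<and>
     continuous_map (prod_topology T X) X (\<lambda>(g, x). theta g x)"

definition coarser_topology :: "'g topology \<Rightarrow> 'g topology \<Rightarrow> bool" where
  "coarser_topology S T \<longleftrightarrow> (\<forall>U. openin S U \<longrightarrow> openin T U)"

definition least_admissible_topology ::
  "('g, 'm) monoid_scheme \<Rightarrow> 'a topology \<Rightarrow> ('g \<Rightarrow> 'a \<Rightarrow> 'a) \<Rightarrow> 'g topology \<Rightarrow> bool" where
  "least_admissible_topology G X theta T \<longleftrightarrow> admissible_topology G X theta T \<and>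
     (\<forall>T'. admissible_topology G X theta T' \<longrightarrow> coarser_topology T T')"

definition is_cover :: "'a set \<Rightarrow> 'a set set \<Rightarrow> bool" where
  "is_cover S u \<longleftrightarrow> (\<forall>U\<in>u. U \<subseteq> S) \<and> \<Union>u = S"

definition refines :: "'a set set \<Rightarrow> 'a set set \<Rightarrow> bool" where
  "refines v u \<longleftrightarrow> (\<forall>V\<in>v. \<exists>U\<in>u. V \<subseteq> U)"

definition cover_star :: "'a set \<Rightarrow> 'a set set \<Rightarrow> 'a set" where
  "cover_star A u = \<Union>{U \<in> u. U \<inter> A \<noteq> {}}"

definition star_refines :: "'a set set \<Rightarrow> 'a set set \<Rightarrow> bool" where
  "star_refines v u \<longleftrightarrow> (\<forall>V\<in>v. \<exists>U\<in>u. cover_star V v \<subseteq> U)"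

definition cover_uniformity :: "'a set \<Rightarrow> 'a set set set \<Rightarrow> bool" where
  "cover_uniformity S \<U> \<longleftrightarrow> \<U> \<noteq> {} \<and> (\<forall>u\<in>\<U>. is_cover S u) \<and>
     (\<forall>u\<in>\<U>. \<forall>v. is_cover S v \<and> refines u v \<longrightarrow> v \<in> \<U>) \<and>
     (\<forall>u\<in>\<U>. \<forall>v\<in>\<U>. \<exists>w\<in>\<U>. refines w u \<and> refines w v) \<and>
     (\<forall>u\<in>\<U>. \<exists>v\<in>\<U>. star_refines v u)"

definition compatible_uniformity :: "'a topology \<Rightarrow> 'a set set set \<Rightarrow> bool" where
  "compatible_uniformity X \<U> \<longleftrightarrow> cover_uniformity (topspace X) \<U> \<and>
     (\<forall>W. openin X W \<longleftrightarrow>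
        W \<subseteq> topspace X \<and> (\<forall>x\<in>W. \<exists>u\<in>\<U>. cover_star {x} u \<subseteq> W))"

definition act_set :: "('g \<Rightarrow> 'a \<Rightarrow> 'a) \<Rightarrow> 'g set \<Rightarrow> 'a set \<Rightarrow> 'a set" where
  "act_set theta N V = {theta g y | g y. g \<in> N \<and> y \<in> V}"

definition equiuniformity ::
  "('g, 'm) monoid_scheme \<Rightarrow> 'g topology \<Rightarrow> 'a topology \<Rightarrow> ('g \<Rightarrow> 'a \<Rightarrow> 'a)
     \<Rightarrow> 'a set set set \<Rightarrow> bool" where
  "equiuniformity G T X theta \<U> \<longleftrightarrow> compatible_uniformity X \<U> \<and>
     (\<forall>g\<in>carrier G. \<forall>u\<in>\<U>. {theta g -` U \<inter> topspace X | U. U \<in> u} \<in> \<U>) \<and>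
     (\<forall>u\<in>\<U>. \<exists>N v. openin T N \<and> \<one>\<^bsub>G\<^esub> \<in> N \<and> v \<in> \<U> \<and>
        refines {act_set theta N V | V. V \<in> v} u)"

definition G_Tychonoff ::
  "('g, 'm) monoid_scheme \<Rightarrow> 'g topology \<Rightarrow> 'a topology \<Rightarrow> ('g \<Rightarrow> 'a \<Rightarrow> 'a) \<Rightarrow> bool" where
  "G_Tychonoff G T X theta \<longleftrightarrow> G_space G T X theta \<and> (\<exists>\<U>. equiuniformity G T X theta \<U>)"

definition totally_bounded_uniformity :: "'a set \<Rightarrow> 'a set set set \<Rightarrow> bool" where
  "totally_bounded_uniformity S \<U> \<longleftrightarrow> (\<forall>u\<in>\<U>. \<exists>w\<subseteq>u. finite w \<and> \<Union>w = S)"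

text \<open>(B, e) is the completion of the totally bounded separated uniform space (X, U):
  B is compact Hausdorff, e embeds X densely into B, and U is the trace on X
  of the unique uniformity of B (whose uniform covers are the covers refined
  by an open cover of B).\<close>
definition completion_of ::
  "'a topology \<Rightarrow> 'a set set set \<Rightarrow> 'b topology \<Rightarrow> ('a \<Rightarrow> 'b) \<Rightarrow> bool" where
  "completion_of X \<U> B e \<longleftrightarrow> compact_space B \<and> Hausdorff_space B \<and>
     embedding_map X B e \<and> B closure_of (e ` topspace X) = topspace B \<and>
     \<U> = {u. is_cover (topspace X) u \<and>
            (\<exists>w. (\<forall>W\<in>w. openin B W) \<and> \<Union>w = topspace B \<and>
                 refines {e -` W \<inter> topspace X | W. W \<in> w} u)}"

definition G_compactification ::
  "('g, 'm) monoid_scheme \<Rightarrow> 'g topology \<Rightarrow> 'a topology \<Rightarrow> ('g \<Rightarrow> 'a \<Rightarrow> 'a)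
     \<Rightarrow> 'b topology \<Rightarrow> ('a \<Rightarrow> 'b) \<Rightarrow> bool" where
  "G_compactification G T X theta B e \<longleftrightarrow>
     (\<exists>\<U>. equiuniformity G T X theta \<U> \<and> totally_bounded_uniformity (topspace X) \<U> \<and>
          completion_of X \<U> B e)"

definition extended_action ::
  "('g, 'm) monoid_scheme \<Rightarrow> 'a topology \<Rightarrow> ('g \<Rightarrow> 'a \<Rightarrow> 'a)
     \<Rightarrow> 'b topology \<Rightarrow> ('a \<Rightarrow> 'b) \<Rightarrow> ('g \<Rightarrow> 'b \<Rightarrow> 'b) \<Rightarrow> bool" where
  "extended_action G X theta B e thetab \<longleftrightarrow>
     (\<forall>g\<in>carrier G. continuous_map B B (thetab g) \<and>
        (\<forall>x\<in>topspace X. thetab g (e x) = e (theta g x)))"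

end

theory Submission
  imports Defs
begin


lemma gen_coarser:
  assumes "\<And>s. s \<in> S \<Longrightarrow> openin T s" "openin (topology_generated_by S) U"
  shows "openin T U"
proof -
  have "generate_topology_on S U" using assms(2) by (rule openin_topology_generated_by)
  then show ?thesis
    by induct (auto intro: assms(1) openin_Union)
qed

lemma embedding_open:
  assumes "embedding_map X B e" "openin X W"
  shows "\<exists>W'. openin B W' \<and> W = {x\<in>topspace X. e x \<in> W'}"
proof -
  have h: "homeomorphic_map X (subtopology B (e ` topspace X)) e"
    using assms(1) by (simp add: embedding_map_def)
  have "openin (subtopology B (e ` topspace X)) (e ` W)"
    using homeomorphic_imp_open_map[OF h] assms(2) by (simp add: open_map_def)
  then obtain W' where W': "openin B W'" "e ` W = W' \<inter> e ` topspace X"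
    by (auto simp: openin_subtopology)
  have inj: "inj_on e (topspace X)" using homeomorphic_imp_injective_map[OF h] .
  have sub: "W \<subseteq> topspace X" using assms(2) by (simp add: openin_subset)
  have "W = {x\<in>topspace X. e x \<in> W'}"
  proof
    show "W \<subseteq> {x\<in>topspace X. e x \<in> W'}" using sub W' by auto
    show "{x\<in>topspace X. e x \<in> W'} \<subseteq> W"
    proof
      fix x assume x: "x \<in> {x\<in>topspace X. e x \<in> W'}"
      then have "e x \<in> e ` W" using W' by auto
      then obtain y where "y \<in> W" "e y = e x" by auto
      then show "x \<in> W" using inj x sub by (metis (no_types, lifting) inj_onD mem_Collect_eq subsetD)
    qed
  qed
  then show ?thesis using W' by blast
qed

lemma embedding_cont:
  assumes "embedding_map X B e" shows "continuous_map X B e"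
  using assms unfolding embedding_map_def
  using continuous_map_in_subtopology homeomorphic_imp_continuous_map by blast



lemma reg_shrink:
  assumes "regular_space B" "openin B Ob" "p \<in> Ob"
  shows "\<exists>W. openin B W \<and> p \<in> W \<and> B closure_of W \<subseteq> Ob"
proof -
  have "closedin B (topspace B - Ob)" using assms(2) by blast
  moreover have "p \<in> topspace B - (topspace B - Ob)" using assms(2,3) openin_subset by fastforce
  ultimately obtain U where "openin B U" "p \<in> U" "disjnt (topspace B - Ob) (B closure_of U)"
    using assms(1) unfolding regular_space by blast
  moreover have "B closure_of U \<subseteq> topspace B" by (rule closure_of_subset_topspace)
  ultimately show ?thesis by (auto simp: disjnt_def)
qed

lemma grp_aux:
  assumes "group G" "g \<in> carrier G" "g0 \<in> carrier G"
  shows "(g \<otimes>\<^bsub>G\<^esub> inv\<^bsub>G\<^esub> g0) \<otimes>\<^bsub>G\<^esub> g0 = g"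
    and "g \<otimes>\<^bsub>G\<^esub> inv\<^bsub>G\<^esub> g0 \<in> carrier G"
    and "g0 \<otimes>\<^bsub>G\<^esub> inv\<^bsub>G\<^esub> g0 = \<one>\<^bsub>G\<^esub>"
proof -
  interpret group G by fact
  show "(g \<otimes>\<^bsub>G\<^esub> inv\<^bsub>G\<^esub> g0) \<otimes>\<^bsub>G\<^esub> g0 = g"
    using assms by (simp add: m_assoc)
  show "g \<otimes>\<^bsub>G\<^esub> inv\<^bsub>G\<^esub> g0 \<in> carrier G" using assms by simp
  show "g0 \<otimes>\<^bsub>G\<^esub> inv\<^bsub>G\<^esub> g0 = \<one>\<^bsub>G\<^esub>" using assms by simp
qed

lemma right_mult_cont:
  assumes "group_topology G T" "c \<in> carrier G"
  shows "continuous_map T T (\<lambda>g. g \<otimes>\<^bsub>G\<^esub> c)"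
proof -
  have m: "continuous_map (prod_topology T T) T (\<lambda>(g, h). g \<otimes>\<^bsub>G\<^esub> h)"
    and ts: "topspace T = carrier G" using assms(1) by (auto simp: group_topology_def)
  have "continuous_map T (prod_topology T T) (\<lambda>g. (g, c))"
    using assms(2) ts by (simp add: continuous_map_pairwise o_def)
  from continuous_map_compose[OF this m] show ?thesis by (simp add: o_def)
qed

lemma orbit_cont:
  assumes "continuous_map (prod_topology T B) B (\<lambda>(g, x). thetab g x)" "b \<in> topspace B"
  shows "continuous_map T B (\<lambda>g. thetab g b)"
proof -
  have "continuous_map T (prod_topology T B) (\<lambda>g. (g, b))"
    using assms(2) by (simp add: continuous_map_pairwise o_def)
  from continuous_map_compose[OF this assms(1)] show ?thesis by (simp add: o_def)
qed

lemma coarser_pw: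
  assumes "admissible_topology G B thetab T'"
  shows "coarser_topology (pointwise_topology G B thetab) T'"
  unfolding coarser_topology_def pointwise_topology_def
proof (intro allI impI)
  fix U assume U: "openin (topology_generated_by (insert (carrier G)
       {{g \<in> carrier G. thetab g x \<in> W} | x W. x \<in> topspace B \<and> openin B W})) U"
  have ts: "topspace T' = carrier G" using assms by (simp add: admissible_topology_def group_topology_def)
  show "openin T' U"
  proof (rule gen_coarser[OF _ U])
    fix s assume "s \<in> insert (carrier G) {{g \<in> carrier G. thetab g x \<in> W} | x W. x \<in> topspace B \<and> openin B W}"
    then show "openin T' s"
    proof
      assume "s = carrier G" then show ?thesis using ts by (metis openin_topspace)
    next
      assume "s \<in> {{g \<in> carrier G. thetab g x \<in> W} | x W. x \<in> topspace B \<and> openin B W}"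
      then obtain x W where s: "s = {g \<in> carrier G. thetab g x \<in> W}" "x \<in> topspace B" "openin B W" by blast
      have "continuous_map T' B (\<lambda>g. thetab g x)"
        using orbit_cont assms s(2) by (metis admissible_topology_def)
      from openin_continuous_map_preimage[OF this s(3)] show ?thesis using s(1) ts by simp
    qed
  qed
qed



lemma ext_cont:
  assumes gt: "group_topology G T"
    and act: "action_by_homeos G X theta"
    and eu: "equiuniformity G T X theta \<U>"
    and comp: "completion_of X \<U> B e"
    and ext: "extended_action G X theta B e thetab"
  shows "continuous_map (prod_topology T B) B (\<lambda>(g, b). thetab g b)"
proof -
  have grp: "group G" and ts: "topspace T = carrier G" using gt by (auto simp: group_topology_def)
  have cB: "compact_space B" and hB: "Hausdorff_space B" and emb: "embedding_map X B e"
    and dense: "B closure_of (e ` topspace X) = topspace B"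
    and Udef: "\<U> = {u. is_cover (topspace X) u \<and>
            (\<exists>w. (\<forall>W\<in>w. openin B W) \<and> \<Union>w = topspace B \<and>
                 refines {e -` W \<inter> topspace X | W. W \<in> w} u)}"
    using comp by (auto simp: completion_of_def)
  have reg: "regular_space B" using cB hB compact_Hausdorff_imp_regular_space by blast
  have ce: "continuous_map X B e" using emb embedding_cont by blast
  have eX: "\<And>x. x \<in> topspace X \<Longrightarrow> e x \<in> topspace B" using ce by (auto simp: continuous_map_def)
  have thmul: "\<And>g h x. g \<in> carrier G \<Longrightarrow> h \<in> carrier G \<Longrightarrow> x \<in> topspace X \<Longrightarrow>
      theta (g \<otimes>\<^bsub>G\<^esub> h) x = theta g (theta h x)"
    using act unfolding action_by_homeos_def by blast
  have cthb: "\<And>g. g \<in> carrier G \<Longrightarrow> continuous_map B B (thetab g)"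
    and thbe: "\<And>g x. g \<in> carrier G \<Longrightarrow> x \<in> topspace X \<Longrightarrow> thetab g (e x) = e (theta g x)"
    using ext by (auto simp: extended_action_def)
  have thbB: "\<And>g b. g \<in> carrier G \<Longrightarrow> b \<in> topspace B \<Longrightarrow> thetab g b \<in> topspace B"
    using cthb by (auto simp: continuous_map_def)
  show ?thesis
    unfolding continuous_map_def
  proof (intro conjI allI impI)
    show "(\<lambda>(g, b). thetab g b) \<in> topspace (prod_topology T B) \<rightarrow> topspace B"
      using thbB ts by auto
  next
    fix Ob assume Ob: "openin B Ob"
    show "openin (prod_topology T B) {z \<in> topspace (prod_topology T B). (case z of (g, b) \<Rightarrow> thetab g b) \<in> Ob}"
      unfolding openin_prod_topology_alt
    proof (intro allI impI)
      fix g0 b assume "(g0, b) \<in> {z \<in> topspace (prod_topology T B). (case z of (g, b) \<Rightarrow> thetab g b) \<in> Ob}"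
      then have g0: "g0 \<in> carrier G" and b: "b \<in> topspace B" and pO: "thetab g0 b \<in> Ob"
        using ts by auto
      define p where "p = thetab g0 b"
      obtain W1 where W1: "openin B W1" "p \<in> W1" "B closure_of W1 \<subseteq> Ob"
        using reg_shrink[OF reg Ob] pO p_def by blast
      obtain W2 where W2: "openin B W2" "p \<in> W2" "B closure_of W2 \<subseteq> W1"
        using reg_shrink[OF reg W1(1,2)] by blast
      define w0 where "w0 = {W1, topspace B - B closure_of W2}"
      define u0 where "u0 = {e -` W \<inter> topspace X | W. W \<in> w0}"
      have w0o: "\<forall>W\<in>w0. openin B W" using W1 unfolding w0_def by auto
      have W2sub: "W2 \<subseteq> B closure_of W2" using W2(1) by (simp add: closure_of_subset openin_subset)
      have W1sub: "W1 \<subseteq> topspace B" using W1(1) by (rule openin_subset)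
      have w0u: "\<Union>w0 = topspace B" using W2(3) W1sub unfolding w0_def by auto
      have "is_cover (topspace X) u0"
        unfolding is_cover_def
      proof
        show "\<forall>U\<in>u0. U \<subseteq> topspace X" unfolding u0_def by auto
        show "\<Union> u0 = topspace X"
        proof
          show "\<Union> u0 \<subseteq> topspace X" unfolding u0_def by auto
          show "topspace X \<subseteq> \<Union> u0"
          proof
            fix x assume x: "x \<in> topspace X"
            then obtain W where "W \<in> w0" "e x \<in> W" using eX w0u by blast
            then show "x \<in> \<Union> u0" unfolding u0_def using x by blast
          qed
        qed
      qed
      moreover have "refines {e -` W \<inter> topspace X | W. W \<in> w0} u0"
        unfolding refines_def u0_def by auto
      ultimately have u0U: "u0 \<in> \<U>" using w0o w0u Udef by blast
      obtain N v' where N: "openin T N" "\<one>\<^bsub>G\<^esub> \<in> N" "v' \<in> \<U>"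
         "refines {act_set theta N V | V. V \<in> v'} u0"
        using eu u0U unfolding equiuniformity_def by blast
      have NG: "N \<subseteq> carrier G" using N(1) ts openin_subset by metis
      have "{theta g0 -` U \<inter> topspace X | U. U \<in> v'} \<in> \<U>"
        using eu g0 N(3) unfolding equiuniformity_def by blast
      then obtain w'' where w'': "\<forall>W\<in>w''. openin B W" "\<Union>w'' = topspace B"
          "refines {e -` W \<inter> topspace X | W. W \<in> w''} {theta g0 -` U \<inter> topspace X | U. U \<in> v'}"
        using Udef by blast
      obtain W'' where W'': "W'' \<in> w''" "b \<in> W''" using w''(2) b by blast
      have oW'': "openin B W''" using w''(1) W''(1) by blast
      obtain V' where V': "V' \<in> v'" "e -` W'' \<inter> topspace X \<subseteq> theta g0 -` V' \<inter> topspace X"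
        using w''(3) W''(1) unfolding refines_def by blast
      obtain W0 where W0: "W0 \<in> w0" "act_set theta N V' \<subseteq> e -` W0 \<inter> topspace X"
        using N(4) V'(1) unfolding refines_def u0_def by blast
      have A: "e (theta h (theta g0 x)) \<in> W0" if "h \<in> N" "x \<in> topspace X" "e x \<in> W''" for h x
      proof -
        have "theta g0 x \<in> V'" using V'(2) that by auto
        then have "theta h (theta g0 x) \<in> act_set theta N V'" using that(1) unfolding act_set_def by blast
        then show ?thesis using W0(2) by blast
      qed
      define N' where "N' = {g \<in> topspace T. g \<otimes>\<^bsub>G\<^esub> inv\<^bsub>G\<^esub> g0 \<in> N}"
      have oN': "openin T N'" unfolding N'_def
        by (rule openin_continuous_map_preimage[OF right_mult_cont[OF gt] N(1)])
           (use grp g0 in simp)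
      have B: "thetab g b' \<in> B closure_of W0" if "g \<in> N'" "b' \<in> W''" for g b'
      proof -
        have g: "g \<in> carrier G" "g \<otimes>\<^bsub>G\<^esub> inv\<^bsub>G\<^esub> g0 \<in> N" using that(1) ts unfolding N'_def by auto
        have "b' \<in> W'' \<inter> B closure_of (e ` topspace X)" using that(2) oW'' dense openin_subset by blast
        also have "\<dots> \<subseteq> B closure_of (W'' \<inter> e ` topspace X)" by (rule openin_Int_closure_of_subset[OF oW''])
        finally have "thetab g b' \<in> thetab g ` (B closure_of (W'' \<inter> e ` topspace X))" by blast
        also have "\<dots> \<subseteq> B closure_of (thetab g ` (W'' \<inter> e ` topspace X))"
          by (rule continuous_map_image_closure_subset[OF cthb[OF g(1)]])
        also have "\<dots> \<subseteq> B closure_of W0"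
        proof (rule closure_of_mono, clarify)
          fix x assume x: "e x \<in> W''" "x \<in> topspace X"
          have "thetab g (e x) = e (theta g x)" using thbe g(1) x(2) by blast
          also have "theta g x = theta (g \<otimes>\<^bsub>G\<^esub> inv\<^bsub>G\<^esub> g0) (theta g0 x)"
            using thmul[OF grp_aux(2)[OF grp g(1) g0] g0 x(2)] grp_aux(1)[OF grp g(1) g0] by simp
          finally show "thetab g (e x) \<in> W0" using A[OF g(2) x(2,1)] by simp
        qed
        finally show ?thesis .
      qed
      have "g0 \<in> N'" unfolding N'_def using g0 ts grp_aux(3)[OF grp g0 g0] N(2) by simp
      then have pW0: "p \<in> B closure_of W0" using B W''(2) p_def by blast
      have "W0 = W1"
      proof (rule ccontr)
        assume "W0 \<noteq> W1"
        then have W0eq: "W0 = topspace B - B closure_of W2" using W0(1) unfolding w0_def by blast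
        have "B closure_of W0 \<subseteq> topspace B - W2"
          by (rule closure_of_minimal) (use W0eq W2sub W2(1) in auto)
        then show False using pW0 W2(2) by blast
      qed
      show "\<exists>U V. openin T U \<and> openin B V \<and> g0 \<in> U \<and> b \<in> V \<and>
          U \<times> V \<subseteq> {z \<in> topspace (prod_topology T B). (case z of (g, b) \<Rightarrow> thetab g b) \<in> Ob}"
      proof (intro exI conjI)
        show "N' \<times> W'' \<subseteq> {z \<in> topspace (prod_topology T B). (case z of (g, b) \<Rightarrow> thetab g b) \<in> Ob}"
        proof clarify
          fix g b' assume "g \<in> N'" "b' \<in> W''"
          then show "(g, b') \<in> topspace (prod_topology T B) \<and> thetab g b' \<in> Ob"
            using B[of g b'] \<open>W0 = W1\<close> W1(3) oW'' openin_subset N'_def by fastforce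
        qed
      qed (use oN' oW'' \<open>g0 \<in> N'\<close> W''(2) in auto)
    qed
  qed
qed



theorem mainTheorem1:
  fixes G :: "('g, 'm) monoid_scheme"
    and X :: "'a topology" and theta :: "'g \<Rightarrow> 'a \<Rightarrow> 'a"
    and B :: "'b topology" and e :: "'a \<Rightarrow> 'b" and thetab :: "'g \<Rightarrow> 'b \<Rightarrow> 'b"
  assumes "tychonoff_space X"
    and "effective_action G X theta"
    and "G_Tychonoff G (pointwise_topology G X theta) X theta"
    and "G_compactification G (pointwise_topology G X theta) X theta B e"
    and "extended_action G X theta B e thetab"
  shows "least_admissible_topology G B thetab (pointwise_topology G B thetab)
         \<and> pointwise_topology G B thetab = pointwise_topology G X theta"
proof -
  define T where "T = pointwise_topology G X theta"
  have gt: "group_topology G T" and act: "action_by_homeos G X theta"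
    using assms(3) unfolding T_def G_Tychonoff_def G_space_def by auto
  obtain \<U> where eu: "equiuniformity G T X theta \<U>" and comp: "completion_of X \<U> B e"
    using assms(4) unfolding T_def G_compactification_def by blast
  have cont: "continuous_map (prod_topology T B) B (\<lambda>(g, b). thetab g b)"
    by (rule ext_cont[OF gt act eu comp assms(5)])
  have adm: "admissible_topology G B thetab T"
    using gt cont by (simp add: admissible_topology_def)
  have c1: "coarser_topology (pointwise_topology G B thetab) T" by (rule coarser_pw[OF adm])
  have emb: "embedding_map X B e" using comp by (simp add: completion_of_def)
  have thX: "theta g x \<in> topspace X" if "g \<in> carrier G" "x \<in> topspace X" for g x
  proof -
    have "homeomorphic_map X X (theta g)" using act that(1) by (simp add: action_by_homeos_def)
    from homeomorphic_imp_surjective_map[OF this] show ?thesis using that(2) by blast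
  qed
  have eX: "e x \<in> topspace B" if "x \<in> topspace X" for x
    using embedding_cont[OF emb] that by (auto simp: continuous_map_def)
  have thbe: "\<And>g x. g \<in> carrier G \<Longrightarrow> x \<in> topspace X \<Longrightarrow> thetab g (e x) = e (theta g x)"
    using assms(5) by (auto simp: extended_action_def)
  have c2: "coarser_topology T (pointwise_topology G B thetab)"
    unfolding coarser_topology_def T_def pointwise_topology_def
  proof (intro allI impI)
    fix U assume U: "openin (topology_generated_by (insert (carrier G)
       {{g \<in> carrier G. theta g x \<in> W} | x W. x \<in> topspace X \<and> openin X W})) U"
    show "openin (topology_generated_by (insert (carrier G)
       {{g \<in> carrier G. thetab g x \<in> W} | x W. x \<in> topspace B \<and> openin B W})) U"
    proof (rule gen_coarser[OF _ U])
      fix s assume "s \<in> insert (carrier G) {{g \<in> carrier G. theta g x \<in> W} | x W. x \<in> topspace X \<and> openin X W}"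
      then show "openin (topology_generated_by (insert (carrier G)
       {{g \<in> carrier G. thetab g x \<in> W} | x W. x \<in> topspace B \<and> openin B W})) s"
      proof
        assume "s = carrier G" then show ?thesis by (simp add: topology_generated_by_Basis)
      next
        assume "s \<in> {{g \<in> carrier G. theta g x \<in> W} | x W. x \<in> topspace X \<and> openin X W}"
        then obtain x W where s: "s = {g \<in> carrier G. theta g x \<in> W}" "x \<in> topspace X" "openin X W" by blast
        obtain W' where W': "openin B W'" "W = {y\<in>topspace X. e y \<in> W'}"
          using embedding_open[OF emb s(3)] by blast
        have "s = {g \<in> carrier G. thetab g (e x) \<in> W'}"
          using s(1,2) W'(2) thX thbe by auto
        then have "s \<in> {{g \<in> carrier G. thetab g x \<in> W} | x W. x \<in> topspace B \<and> openin B W}"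
          using eX[OF s(2)] W'(1) by blast
        then show ?thesis by (simp add: topology_generated_by_Basis)
      qed
    qed
  qed
  have eq: "pointwise_topology G B thetab = T"
    using c1 c2 unfolding coarser_topology_def by (metis topology_eq)
  have all: "\<forall>T'. admissible_topology G B thetab T' \<longrightarrow> coarser_topology (pointwise_topology G B thetab) T'"
    using coarser_pw by blast
  have adm': "admissible_topology G B thetab (pointwise_topology G B thetab)" using adm eq by simp
  show ?thesis
    unfolding least_admissible_topology_def
    using all adm' eq T_def by blast
qed

end
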